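(* For all $W\in\mathcal{C}$ and all $\bar\varphi\in\mathbb{R}$ we have $\mathcal{L}\big(W(\cdot+\bar\varphi)\big)=\mathcal{L}(W)$.
   Context: Let $\Phi:\mathbb{R}\to\mathbb{R}$ be twice continuously differentiable on $[-1,1]$ with: $\Phi'(-1)=-1$, $\Phi'(1)=1$; $\Phi''\ge0$ on $[-1,1]$; $\Phi(-1)=\Phi(1)$; $\Phi''(-1)<1$, $\Phi''(1)<1$; and $g_\Phi(w):=\int_{-1}^w(v-\Phi'(v))\,dv>0$ for all $w\in(-1,1)$. $(\mathcal{A}U)(\varphi)=\int_{\varphi-1/2}^{\varphi+1/2}U(s)\,ds$; $W_{\rm sh}(\varphi)=\mathrm{sgn}(\varphi)$; $\mathcal{H}=\{W\text{ measurable}: W_{\rm sh}-W\in L^2(\mathbb{R})\}$; $\mathcal{L}(W)=\int_{\mathbb{R}}(\tfrac12W^2-\Phi(\mathcal{A}W))-(\tfrac12W_{\rm sh}^2-\Phi(\mathcal{A}W_{\rm sh}))\,d\varphi$. $\mathcal{C}$ is the set of $W\in\mathcal{H}$ that are a.e. equal to a nondecreasing function with $W(\varphi)\to\pm1$ as $\varphi\to\pm\infty$. *)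

theory Defs
  imports "HOL-Analysis.Analysis"
begin

definition avgop :: "(real \<Rightarrow> real) \<Rightarrow> real \<Rightarrow> real" where
  "avgop U \<phi> = (LINT s:{\<phi> - 1/2 .. \<phi> + 1/2}|lebesgue. U s)"

definition Wsh :: "real \<Rightarrow> real" where
  "Wsh \<phi> = sgn \<phi>"

definition Hspace :: "(real \<Rightarrow> real) set" where
  "Hspace = {W. W \<in> borel_measurable lebesgue \<and>
                 integrable lebesgue (\<lambda>\<phi>. (Wsh \<phi> - W \<phi>)\<^sup>2)}"

definition Lfun :: "(real \<Rightarrow> real) \<Rightarrow> (real \<Rightarrow> real) \<Rightarrow> real" where
  "Lfun \<Phi> W = (LINT \<phi>|lebesgue.
      ((1/2) * (W \<phi>)\<^sup>2 - \<Phi> (avgop W \<phi>)) - ((1/2) * (Wsh \<phi>)\<^sup>2 - \<Phi> (avgop Wsh \<phi>)))"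

definition Ccone :: "(real \<Rightarrow> real) set" where
  "Ccone = {W \<in> Hspace. \<exists>V. mono V \<and> (AE \<phi> in lebesgue. W \<phi> = V \<phi>) \<and>
                           (V \<longlongrightarrow> -1) at_bot \<and> (V \<longlongrightarrow> 1) at_top}"

end

theory Submission
  imports Defs
begin

lemma A0_lborel: "avgop Wsh p = (\<integral>s. indicator {p-1/2..p+1/2} s * sgn s \<partial>lborel)"
  unfolding avgop_def set_lebesgue_integral_def Wsh_def
  by (simp add: integral_completion)

lemma A0_meas: "(\<lambda>p. avgop Wsh p) \<in> borel_measurable borel"
proof -
  define S where "S = {x::real\<times>real. fst x - 1/2 \<le> snd x \<and> snd x \<le> fst x + 1/2}"
  have cl: "closed S" unfolding S_def
    by (intro closed_Collect_conj closed_Collect_le continuous_intros)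
  have sn: "(snd :: real\<times>real \<Rightarrow> real) \<in> borel_measurable borel"
    by (intro borel_measurable_continuous_onI continuous_intros)
  have m: "(\<lambda>x::real\<times>real. indicator S x * sgn (snd x) :: real) \<in> borel_measurable borel"
    apply (rule borel_measurable_times)
     apply (rule borel_measurable_indicator)
     apply (rule borel_closed[OF cl])
    using measurable_compose[OF sn borel_measurable_sgn] by (simp add: o_def)
  have seq: "sets (borel \<Otimes>\<^sub>M lborel) = sets (borel :: (real\<times>real) measure)"
  proof -
    have "sets (borel \<Otimes>\<^sub>M lborel) = sets (borel \<Otimes>\<^sub>M (borel::real measure))"
      by (rule sets_pair_measure_cong[OF refl sets_lborel])
    also have "(borel \<Otimes>\<^sub>M (borel::real measure)) = (borel :: (real\<times>real) measure)"
      by (rule borel_prod)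
    finally show ?thesis .
  qed
  have eq: "(\<lambda>(p::real, s::real). indicator {p-1/2..p+1/2} s * sgn s :: real) = (\<lambda>x. indicator S x * sgn (snd x))"
    by (simp add: fun_eq_iff S_def indicator_def split_def)
  have "(\<lambda>(p::real, s::real). indicator {p-1/2..p+1/2} s * sgn s :: real) \<in> borel_measurable (borel \<Otimes>\<^sub>M lborel)"
    unfolding eq measurable_cong_sets[OF seq refl] by (rule m)
  then have "(\<lambda>p::real. (\<integral>s. indicator {p-1/2..p+1/2} s * sgn s \<partial>lborel) :: real) \<in> borel_measurable borel"
    by (rule lborel.borel_measurable_lebesgue_integral)
  then show ?thesis by (simp add: A0_lborel)
qed

lemma A0_bound: "\<bar>avgop Wsh p\<bar> \<le> 1"
proof -
  let ?f = "\<lambda>s. indicator {p-1/2..p+1/2} s * sgn s :: real"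
  have int: "integrable lborel (\<lambda>s. indicator {p-1/2..p+1/2} s *\<^sub>R sgn s :: real)"
    by (rule integrableI_bounded_set_indicator[where B=1]) (auto simp: abs_sgn_eq)
  then have int2: "integrable lborel (\<lambda>s. norm (?f s))"
    by (intro integrable_norm) simp
  have "norm (\<integral>s. ?f s \<partial>lborel) \<le> (\<integral>s. norm (?f s) \<partial>lborel)"
    by (rule integral_norm_bound)
  then have 1: "\<bar>avgop Wsh p\<bar> \<le> (\<integral>s. norm (?f s) \<partial>lborel)"
    unfolding A0_lborel real_norm_def .
  have "(\<integral>s. norm (?f s) \<partial>lborel) \<le> (\<integral>s. indicator {p-1/2..p+1/2} s \<partial>lborel)"
  proof (rule integral_mono[OF int2])
    show "integrable lborel (indicator {p-1/2..p+1/2} :: real \<Rightarrow> real)" by simp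
    fix s show "norm (?f s) \<le> indicator {p-1/2..p+1/2} s"
      by (simp add: indicator_def abs_sgn_eq abs_mult)
  qed
  also have "\<dots> = 1" by simp
  finally show ?thesis using 1 by linarith
qed

lemma A0_pos: "p > 1/2 \<Longrightarrow> avgop Wsh p = 1"
proof -
  assume p: "p > 1/2"
  have "avgop Wsh p = (\<integral>s. indicator {p-1/2..p+1/2} s \<partial>lborel)"
    unfolding A0_lborel using p
    by (intro Bochner_Integration.integral_cong refl) (auto simp: indicator_def)
  also have "\<dots> = 1" by simp
  finally show ?thesis .
qed

lemma A0_neg: "p < -1/2 \<Longrightarrow> avgop Wsh p = -1"
proof -
  assume p: "p < -1/2"
  have "avgop Wsh p = (\<integral>s. - indicator {p-1/2..p+1/2} s \<partial>lborel)"
    unfolding A0_lborel using p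
    by (intro Bochner_Integration.integral_cong refl) (auto simp: indicator_def)
  also have "\<dots> = -1" by simp
  finally show ?thesis .
qed

lemma shift_meas: "(\<lambda>x::real. x + t) \<in> lebesgue \<rightarrow>\<^sub>M lebesgue"
  using lebesgue_affine_measurable[where c="\<lambda>_::real. 1" and t=t] by (simp add: add.commute)

lemma lebesgue_shift: "lebesgue = distr lebesgue lebesgue (\<lambda>x::real. x + t)"
  using lebesgue_real_affine[of 1 t] by (simp add: add.commute density_1)

lemma shift_meas_iff: "(\<lambda>x. g (x + t)) \<in> borel_measurable lebesgue \<longleftrightarrow> (g::real\<Rightarrow>real) \<in> borel_measurable lebesgue"
proof
  assume "g \<in> borel_measurable lebesgue"
  then show "(\<lambda>x. g (x + t)) \<in> borel_measurable lebesgue"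
    using measurable_compose[OF shift_meas] by blast
next
  assume "(\<lambda>x. g (x + t)) \<in> borel_measurable lebesgue"
  then have "(\<lambda>x. g (x + (-t) + t)) \<in> borel_measurable lebesgue"
    using measurable_compose[OF shift_meas[of "-t"]] by blast
  then show "g \<in> borel_measurable lebesgue" by simp
qed

lemma shift_integrable_iff: "integrable lebesgue (\<lambda>x. g (x + t)) \<longleftrightarrow> integrable lebesgue (g::real\<Rightarrow>real)"
proof (cases "g \<in> borel_measurable lebesgue")
  case True
  have "integrable lebesgue g \<longleftrightarrow> integrable (distr lebesgue lebesgue (\<lambda>x::real. x + t)) g"
    using lebesgue_shift[of t] by simp
  also have "\<dots> \<longleftrightarrow> integrable lebesgue (\<lambda>x. g (x + t))"
    by (rule integrable_distr_eq[OF shift_meas True])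
  finally show ?thesis by simp
next
  case False
  then show ?thesis using shift_meas_iff[of g t] borel_measurable_integrable by blast
qed

lemma shift_integral: "integral\<^sup>L lebesgue (\<lambda>x. g (x + t)) = integral\<^sup>L lebesgue (g::real\<Rightarrow>real)"
proof (cases "integrable lebesgue g")
  case True
  have "integral\<^sup>L lebesgue g = integral\<^sup>L (distr lebesgue lebesgue (\<lambda>x::real. x + t)) g"
    using lebesgue_shift[of t] by simp
  also have "\<dots> = integral\<^sup>L lebesgue (\<lambda>x. g (x + t))"
    by (rule integral_distr[OF shift_meas borel_measurable_integrable[OF True]])
  finally show ?thesis by simp
next
  case False
  then show ?thesis using shift_integrable_iff[of g t] not_integrable_integral_eq by metis
qed

lemma avgop_shift: "avgop (\<lambda>x. W (x + t)) p = avgop W (p + t)"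
proof -
  have "avgop (\<lambda>x. W (x + t)) p = integral\<^sup>L lebesgue (\<lambda>s. (\<lambda>s. indicator {p + t - 1/2 .. p + t + 1/2} s *\<^sub>R W s) (s + t))"
    unfolding avgop_def set_lebesgue_integral_def
    by (intro Bochner_Integration.integral_cong refl) (auto simp: indicator_def)
  also have "\<dots> = avgop W (p + t)"
    unfolding avgop_def set_lebesgue_integral_def by (rule shift_integral)
  finally show ?thesis .
qed


theorem corollary3p10:
  fixes \<Phi> dPhi ddPhi :: "real \<Rightarrow> real"
  assumes d1: "\<And>x. x \<in> {-1..1} \<Longrightarrow> (\<Phi> has_real_derivative dPhi x) (at x within {-1..1})"
    and d2: "\<And>x. x \<in> {-1..1} \<Longrightarrow> (dPhi has_real_derivative ddPhi x) (at x within {-1..1})"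
    and d2c: "continuous_on {-1..1} ddPhi"
    and dm1: "dPhi (-1) = -1" and dp1: "dPhi 1 = 1"
    and convex: "\<And>x. x \<in> {-1..1} \<Longrightarrow> ddPhi x \<ge> 0"
    and sym: "\<Phi> (-1) = \<Phi> 1"
    and ddm1: "ddPhi (-1) < 1" and ddp1: "ddPhi 1 < 1"
    and gpos: "\<And>w. w \<in> {-1<..<1} \<Longrightarrow> integral {-1..w} (\<lambda>v. v - dPhi v) > 0"
    and W: "W \<in> Ccone"
  shows "Lfun \<Phi> (\<lambda>\<phi>. W (\<phi> + \<phi>bar)) = Lfun \<Phi> W"
proof -
  define c where "c = \<phi>bar"
  have contPhi: "continuous_on {-1..1} \<Phi>"
    using d1 by (meson DERIV_continuous continuous_on_eq_continuous_within)
  then obtain B where B: "\<And>x. x \<in> {-1..1} \<Longrightarrow> \<bar>\<Phi> x\<bar> \<le> B"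
    using compact_continuous_image[OF contPhi compact_Icc] compact_imp_bounded
    by (metis bounded_real image_eqI)
  define Pc where "Pc x = \<Phi> (max (-1) (min 1 x))" for x
  have "continuous_on UNIV Pc"
    unfolding Pc_def
    by (rule continuous_on_compose2[OF contPhi]) (auto intro!: continuous_intros)
  then have Pc_meas: "Pc \<in> borel_measurable borel"
    by (rule borel_measurable_continuous_onI)
  define h where "h p = (1/2) * (Wsh p)\<^sup>2 - \<Phi> (avgop Wsh p)" for p
  define k where "k p = h p - (1/2 - \<Phi> 1)" for p
  have A0in: "avgop Wsh p \<in> {-1..1}" for p using A0_bound[of p] by auto
  have k_alt: "k = (\<lambda>p. (1/2) * (sgn p)\<^sup>2 - Pc (avgop Wsh p) - (1/2 - \<Phi> 1))"
    using A0in unfolding k_def h_def Pc_def Wsh_def fun_eq_iff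
    by (metis atLeastAtMost_iff max_absorb2 min_absorb2)
  have "k \<in> borel_measurable borel"
    unfolding k_alt
    by (intro borel_measurable_diff borel_measurable_times borel_measurable_power borel_measurable_const
        measurable_compose[OF A0_meas Pc_meas] borel_measurable_sgn)
  then have "k \<in> borel_measurable lborel"
    using measurable_cong_sets[OF sets_lborel refl] by blast
  then have k_meas: "k \<in> borel_measurable lebesgue"
    by (rule measurable_completion)
  have k0: "k p = 0" if "p \<notin> {-1/2..1/2}" for p
  proof (cases "p > 1/2")
    case True
    then show ?thesis unfolding k_def h_def A0_pos[OF True] using True by (simp add: Wsh_def)
  next
    case False
    then have "p < -1/2" using that by auto
    then show ?thesis unfolding k_def h_def A0_neg[OF \<open>p < -1/2\<close>] using sym by (simp add: Wsh_def)
  qed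
  have kb: "\<bar>k p\<bar> \<le> 1 + 2 * B" for p
  proof -
    have "\<bar>\<Phi> (avgop Wsh p)\<bar> \<le> B" "\<bar>\<Phi> 1\<bar> \<le> B" using B A0in by auto
    moreover have "(sgn p)\<^sup>2 \<le> 1" by (simp add: sgn_if)
    moreover have "(sgn p)\<^sup>2 \<ge> 0" by simp
    ultimately show ?thesis unfolding k_def h_def Wsh_def by linarith
  qed
  have k_int: "integrable lebesgue k"
    by (rule integrableI_bounded_set[where A="{-1/2..1/2}" and B="1 + 2*B"])
       (use k_meas kb k0 in auto)
  have k_int': "integrable lebesgue (\<lambda>p. k (p + c))"
    using k_int shift_integrable_iff by blast
  define F where "F p = (1/2) * (W p)\<^sup>2 - \<Phi> (avgop W p)" for p
  define I where "I p = F p - h p" for p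
  define J where "J p = ((1/2) * (W (p + c))\<^sup>2 - \<Phi> (avgop (\<lambda>x. W (x + c)) p)) - h p" for p
  have LW: "Lfun \<Phi> W = integral\<^sup>L lebesgue I"
    unfolding Lfun_def I_def F_def h_def by simp
  have LW': "Lfun \<Phi> (\<lambda>\<phi>. W (\<phi> + \<phi>bar)) = integral\<^sup>L lebesgue J"
    unfolding Lfun_def J_def h_def c_def by simp
  have JI: "J = (\<lambda>p. I (p + c) + (k (p + c) - k p))"
    unfolding J_def I_def F_def k_def fun_eq_iff avgop_shift by simp
  show ?thesis
  proof (cases "integrable lebesgue I")
    case True
    then have "integrable lebesgue (\<lambda>p. I (p + c))" using shift_integrable_iff by blast
    then have "integral\<^sup>L lebesgue J = integral\<^sup>L lebesgue (\<lambda>p. I (p + c)) + (integral\<^sup>L lebesgue (\<lambda>p. k (p + c)) - integral\<^sup>L lebesgue k)"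
      unfolding JI using k_int k_int' by simp
    also have "\<dots> = integral\<^sup>L lebesgue I"
      using shift_integral[of I c] shift_integral[of k c] by simp
    finally show ?thesis using LW LW' by simp
  next
    case False
    have "\<not> integrable lebesgue J"
    proof
      assume "integrable lebesgue J"
      then have "integrable lebesgue (\<lambda>p. J p - (k (p + c) - k p))"
        using k_int k_int' by simp
      then have "integrable lebesgue (\<lambda>p. I (p + c))" unfolding JI by simp
      then show False using False shift_integrable_iff by blast
    qed
    then show ?thesis using False LW LW' not_integrable_integral_eq by metis
  qed
qed

end
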